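(* In the setting below, fix an assignment matrix $A$ for which event $\mathcal A$ holds. Then, with probability at least $1-\min\{e^{-12m},(np^2)^{-12}\}$ over the random responses, $$\|{\pi^*}^\top(P-P^* )\|_2\ \le\ \frac{2e^{\kappa}\sqrt{16\max\{m,\log(np^2)\}}}{m\sqrt{np^2}} .$$
   Context: Setting. Let $n\ge1$ (number of users) and $m\ge2$ (number of items). Fix user parameters $\theta^*_1,\dots,\theta^*_n\in\mathbb R$ and item parameters $\beta^*_1,\dots,\beta^*_m\in\mathbb R$; let $\kappa=\max_i\beta^*_i-\min_i\beta^*_i$ and $\pi^*_i=e^{\beta^*_i}/\sum_{k=1}^me^{\beta^*_k}$. The responses $X_{li}\in\{0,1\}$ ($l\in[n]$, $i\in[m]$) are independent with $\Pr(X_{li}=1)=e^{\theta^*_l}/(e^{\theta^*_l}+e^{\beta^*_i})$. For an assignment matrix $A\in\{0,1\}^{n\times m}$ and $p\in(0,1]$, let $B=A^\top A$, $d=\frac32mnp^2$, and define $m\times m$ matrices $P,P^*$ by, for $i\ne j$, $P_{ij}=\frac1d\sum_{l=1}^nA_{li}A_{lj}X_{li}(1-X_{lj})$, $P^*_{ij}=\frac1d\sum_{l=1}^nA_{li}A_{lj}\mathbb E[X_{li}(1-X_{lj})]$, and $P_{ii}=1-\sum_{k\ne i}P_{ik}$, $P^*_{ii}=1-\sum_{k\ne i}P^*_{ik}$. Event $\mathcal A$: $\frac12np^2\le B_{ij}\le\frac32np^2$ for all $i\ne j$. $\|\cdot\|_2$ is the Euclidean norm of the row vector ${\pi^*}^\top(P-P^*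 )$. *)

theory Defs
  imports "HOL-Probability.Probability"
begin

text \<open>Users are indexed by {..<n}, items by {..<m}. A response configuration is a
function X :: nat \<times> nat \<Rightarrow> bool, X (l,i) = True meaning X_li = 1.\<close>

definition resp_prob :: "(nat \<Rightarrow> real) \<Rightarrow> (nat \<Rightarrow> real) \<Rightarrow> nat \<Rightarrow> nat \<Rightarrow> real" where
  "resp_prob \<theta> \<beta> l i = exp (\<theta> l) / (exp (\<theta> l) + exp (\<beta> i))"

definition resp_dist :: "nat \<Rightarrow> nat \<Rightarrow> (nat \<Rightarrow> real) \<Rightarrow> (nat \<Rightarrow> real) \<Rightarrow> (nat \<times> nat \<Rightarrow> bool) pmf" where
  "resp_dist n m \<theta> \<beta> = Pi_pmf ({..<n} \<times> {..<m}) False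
      (\<lambda>(l,i). bernoulli_pmf (resp_prob \<theta> \<beta> l i))"

definition bX :: "(nat \<times> nat \<Rightarrow> bool) \<Rightarrow> nat \<Rightarrow> nat \<Rightarrow> real" where
  "bX X l i = of_bool (X (l,i))"

definition bA :: "(nat \<Rightarrow> nat \<Rightarrow> bool) \<Rightarrow> nat \<Rightarrow> nat \<Rightarrow> real" where
  "bA A l i = of_bool (A l i)"

definition dconst :: "nat \<Rightarrow> nat \<Rightarrow> real \<Rightarrow> real" where
  "dconst n m p = 3/2 * real m * real n * p^2"

definition Bmat :: "nat \<Rightarrow> (nat \<Rightarrow> nat \<Rightarrow> bool) \<Rightarrow> nat \<Rightarrow> nat \<Rightarrow> real" where
  "Bmat n A i j = (\<Sum>l<n. bA A l i * bA A l j)"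

definition event_A :: "nat \<Rightarrow> nat \<Rightarrow> real \<Rightarrow> (nat \<Rightarrow> nat \<Rightarrow> bool) \<Rightarrow> bool" where
  "event_A n m p A \<longleftrightarrow> (\<forall>i<m. \<forall>j<m. i \<noteq> j \<longrightarrow>
      1/2 * real n * p^2 \<le> Bmat n A i j \<and> Bmat n A i j \<le> 3/2 * real n * p^2)"

definition Pmat :: "nat \<Rightarrow> nat \<Rightarrow> real \<Rightarrow> (nat \<Rightarrow> nat \<Rightarrow> bool) \<Rightarrow> (nat \<times> nat \<Rightarrow> bool) \<Rightarrow> nat \<Rightarrow> nat \<Rightarrow> real" where
  "Pmat n m p A X i j =
     (if i \<noteq> j then (1 / dconst n m p) * (\<Sum>l<n. bA A l i * bA A l j * bX X l i * (1 - bX X l j))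
      else 1 - (\<Sum>k\<in>{..<m} - {i}. (1 / dconst n m p) * (\<Sum>l<n. bA A l i * bA A l k * bX X l i * (1 - bX X l k))))"

definition Pstar :: "nat \<Rightarrow> nat \<Rightarrow> real \<Rightarrow> (nat \<Rightarrow> real) \<Rightarrow> (nat \<Rightarrow> real) \<Rightarrow> (nat \<Rightarrow> nat \<Rightarrow> bool) \<Rightarrow> nat \<Rightarrow> nat \<Rightarrow> real" where
  "Pstar n m p \<theta> \<beta> A i j =
     (let E = (\<lambda>i j. (1 / dconst n m p) * (\<Sum>l<n. bA A l i * bA A l j *
                 measure_pmf.expectation (resp_dist n m \<theta> \<beta>) (\<lambda>X. bX X l i * (1 - bX X l j))))
      in if i \<noteq> j then E i j else 1 - (\<Sum>k\<in>{..<m} - {i}. E i k))"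

definition pistar :: "nat \<Rightarrow> (nat \<Rightarrow> real) \<Rightarrow> nat \<Rightarrow> real" where
  "pistar m \<beta> i = exp (\<beta> i) / (\<Sum>k<m. exp (\<beta> k))"

definition kappa :: "nat \<Rightarrow> (nat \<Rightarrow> real) \<Rightarrow> real" where
  "kappa m \<beta> = Max (\<beta> ` {..<m}) - Min (\<beta> ` {..<m})"

definition err_norm :: "nat \<Rightarrow> nat \<Rightarrow> real \<Rightarrow> (nat \<Rightarrow> real) \<Rightarrow> (nat \<Rightarrow> real) \<Rightarrow> (nat \<Rightarrow> nat \<Rightarrow> bool) \<Rightarrow> (nat \<times> nat \<Rightarrow> bool) \<Rightarrow> real" where
  "err_norm n m p \<theta> \<beta> A X =
     sqrt (\<Sum>j<m. (\<Sum>i<m. pistar m \<beta> i * (Pmat n m p A X i j - Pstar n m p \<theta> \<beta> A i j))^2)"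

end

theory Submission
  imports Defs
begin


lemma two_point_aux:
  fixes r l x0 x1 :: real
  assumes r: "0 \<le> r" "r \<le> 1" and l: "l \<ge> 0" and x: "x0 \<le> x1"
  shows "(1-r)*exp(l*x0) + r*exp(l*x1) \<le> exp (l*((1-r)*x0 + r*x1) + l^2*(x1-x0)^2/8)"
proof -
  define z where "z = l*(x1-x0)"
  have z: "z \<ge> 0" using l x by (simp add: z_def)
  have pos: "1 + r*(exp z - 1) > 0"
  proof -
    have "exp z \<ge> 1" using z by simp
    then have "r*(exp z - 1) \<ge> 0" using r by simp
    then show ?thesis by linarith
  qed
  have H: "-z*r + ln (1 + r*(exp z - 1)) \<le> z^2/8"
    using Hoeffdings_lemma_aux[OF z r(1)] by simp
  have "(1-r)*exp(l*x0) + r*exp(l*x1) = exp(l*x0) * (1 + r*(exp z - 1))"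
    by (simp add: z_def algebra_simps flip: exp_add)
  also have "\<dots> = exp (l*x0 + ln (1 + r*(exp z - 1)))"
    using pos by (simp add: exp_add)
  also have "\<dots> \<le> exp (l*x0 + (z*r + z^2/8))"
    using H by simp
  also have "l*x0 + (z*r + z^2/8) = l*((1-r)*x0 + r*x1) + l^2*(x1-x0)^2/8"
    by (simp add: z_def algebra_simps power2_eq_square)
  finally show ?thesis .
qed

lemma two_point:
  fixes r l x0 x1 :: real
  assumes r: "0 \<le> r" "r \<le> 1" and l: "l \<ge> 0"
  shows "(1-r)*exp(l*x0) + r*exp(l*x1) \<le> exp (l*((1-r)*x0 + r*x1) + l^2*(x1-x0)^2/8)"
proof (cases "x0 \<le> x1")
  case True then show ?thesis using two_point_aux[OF r l] by blast
next
  case False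
  have "(1-(1-r))*exp(l*x1) + (1-r)*exp(l*x0) \<le> exp (l*((1-(1-r))*x1 + (1-r)*x0) + l^2*(x0-x1)^2/8)"
    using two_point_aux[of "1-r" l x1 x0] r l False by simp
  then show ?thesis by (simp add: algebra_simps power2_commute)
qed

lemma finite_set_Pi_bool:
  fixes P :: "'a \<Rightarrow> bool pmf"
  assumes "finite I"
  shows "finite (set_pmf (Pi_pmf I False P))"
proof -
  have "set_pmf (Pi_pmf I False P) \<subseteq> PiE_dflt I False (\<lambda>_. UNIV)"
    using set_Pi_pmf_subset[OF assms, of False P] by (force simp: PiE_dflt_def)
  moreover have "finite (PiE_dflt I False (\<lambda>_. UNIV :: bool set))"
    using assms by (intro finite_PiE_dflt) auto
  ultimately show ?thesis by (rule finite_subset)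
qed

lemma exp_insert:
  fixes P :: "'a \<Rightarrow> bool pmf" and \<phi> :: "('a \<Rightarrow> bool) \<Rightarrow> real"
  assumes "finite I" "a \<notin> I"
  shows "measure_pmf.expectation (Pi_pmf (insert a I) False P) \<phi> =
         measure_pmf.expectation (Pi_pmf I False P) (\<lambda>g. \<Sum>y\<in>UNIV. pmf (P a) y * \<phi> (g(a:=y)))"
proof -
  have fin: "finite (set_pmf (Pi_pmf I False P))" using finite_set_Pi_bool[OF assms(1)] .
  have "measure_pmf.expectation (Pi_pmf (insert a I) False P) \<phi> =
     (\<Sum>y\<in>UNIV. pmf (P a) y *\<^sub>R measure_pmf.expectation (Pi_pmf I False P \<bind> (\<lambda>f. return_pmf (f(a := y)))) \<phi>)"
    unfolding Pi_pmf_insert'[OF assms]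
    by (rule pmf_expectation_bind) (auto simp: fin)
  also have "\<dots> = (\<Sum>y\<in>UNIV. pmf (P a) y * measure_pmf.expectation (Pi_pmf I False P) (\<lambda>g. \<phi> (g(a:=y))))"
    by (simp add: map_pmf_def[symmetric])
  also have "\<dots> = measure_pmf.expectation (Pi_pmf I False P) (\<lambda>g. \<Sum>y\<in>UNIV. pmf (P a) y * \<phi> (g(a:=y)))"
    by (subst Bochner_Integration.integral_sum)
       (auto intro!: integrable_measure_pmf_finite fin)
  finally show ?thesis .
qed

lemma mcd:
  fixes P :: "'a \<Rightarrow> bool pmf" and l :: real and c :: "'a \<Rightarrow> real"
  assumes "finite I" "l \<ge> 0"
  shows "(\<And>X a. a \<in> I \<Longrightarrow> \<bar>f (X(a:=True)) - f (X(a:=False))\<bar> \<le> c a) \<Longrightarrow>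
    measure_pmf.expectation (Pi_pmf I False P) (\<lambda>X. exp (l * f X))
      \<le> exp (l * measure_pmf.expectation (Pi_pmf I False P) f + l^2 * (\<Sum>a\<in>I. (c a)^2)/8)"
  using assms(1)
proof (induction I arbitrary: f rule: finite_induct)
  case empty
  then show ?case by simp
next
  case (insert a I)
  define r where "r = pmf (P a) True"
  have r: "0 \<le> r" "r \<le> 1" by (auto simp: r_def pmf_le_1)
  have pF: "pmf (P a) False = 1 - r"
  proof -
    have "pmf (P a) False + pmf (P a) True = 1" using sum_pmf_eq_1[of UNIV "P a"] by (auto simp: UNIV_bool)
    then show ?thesis by (simp add: r_def)
  qed
  define h where "h = (\<lambda>g. (1-r) * f (g(a:=False)) + r * f (g(a:=True)))"
  have fin: "finite (set_pmf (Pi_pmf I False P))" using finite_set_Pi_bool[OF insert.hyps(1)] .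
  have hb: "\<bar>h (X(b:=True)) - h (X(b:=False))\<bar> \<le> c b" if "b \<in> I" for X b
  proof -
    have ab: "a \<noteq> b" using insert.hyps(2) that by auto
    have d1: "\<bar>f (X(a:=False, b:=True)) - f (X(a:=False, b:=False))\<bar> \<le> c b"
      using insert.prems(1)[of b "X(a:=False)"] that by blast
    have d2: "\<bar>f (X(a:=True, b:=True)) - f (X(a:=True, b:=False))\<bar> \<le> c b"
      using insert.prems(1)[of b "X(a:=True)"] that by blast
    have "h (X(b:=True)) - h (X(b:=False)) =
       (1-r) * (f (X(a:=False, b:=True)) - f (X(a:=False, b:=False))) +
       r * (f (X(a:=True, b:=True)) - f (X(a:=True, b:=False)))"
      using ab by (simp add: h_def fun_upd_twist algebra_simps)
    also have "\<bar>\<dots>\<bar> \<le> (1-r) * c b + r * c b"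
      apply (rule order.trans[OF abs_triangle_ineq])
      apply (rule add_mono)
      using d1 d2 r by (auto simp: abs_mult intro!: mult_left_mono)
    finally show ?thesis by (simp add: algebra_simps)
  qed
  have ca: "\<bar>f (X(a:=True)) - f (X(a:=False))\<bar> \<le> c a" for X
    using insert.prems(1)[of a X] by blast
  have "measure_pmf.expectation (Pi_pmf (insert a I) False P) (\<lambda>X. exp (l * f X))
     = measure_pmf.expectation (Pi_pmf I False P)
          (\<lambda>g. (1-r) * exp (l * f (g(a:=False))) + r * exp (l * f (g(a:=True))))"
    by (simp add: exp_insert[OF insert.hyps] UNIV_bool pF r_def[symmetric] add.commute)
  also have "\<dots> \<le> measure_pmf.expectation (Pi_pmf I False P)
          (\<lambda>g. exp (l * h g + l^2 * (c a)^2/8))"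
  proof (rule integral_mono)
    fix g
    have "(1-r) * exp (l * f (g(a:=False))) + r * exp (l * f (g(a:=True)))
      \<le> exp (l * h g + l^2 * (f (g(a:=True)) - f (g(a:=False)))^2/8)"
      using two_point[OF r assms(2)] by (simp add: h_def)
    also have "\<dots> \<le> exp (l * h g + l^2 * (c a)^2/8)"
    proof -
      have "(f (g(a:=True)) - f (g(a:=False)))^2 \<le> (c a)^2"
        using ca[of g] by (metis abs_ge_zero order_trans power2_abs power_mono)
      then show ?thesis by (simp add: mult_left_mono)
    qed
    finally show "(1-r) * exp (l * f (g(a:=False))) + r * exp (l * f (g(a:=True)))
      \<le> exp (l * h g + l^2 * (c a)^2/8)" .
  qed (auto intro!: integrable_measure_pmf_finite fin)
  also have "\<dots> = exp (l^2 * (c a)^2/8) * measure_pmf.expectation (Pi_pmf I False P) (\<lambda>g. exp (l * h g))"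
    by (simp add: exp_add mult.commute)
  also have "\<dots> \<le> exp (l^2 * (c a)^2/8) * exp (l * measure_pmf.expectation (Pi_pmf I False P) h + l^2 * (\<Sum>b\<in>I. (c b)^2)/8)"
    by (rule mult_left_mono[OF insert.IH]) (use hb in blast, simp)
  also have "measure_pmf.expectation (Pi_pmf I False P) h = measure_pmf.expectation (Pi_pmf (insert a I) False P) f"
    by (simp add: exp_insert[OF insert.hyps] UNIV_bool pF r_def[symmetric] h_def add.commute)
  also have "exp (l^2 * (c a)^2/8) * exp (l * measure_pmf.expectation (Pi_pmf (insert a I) False P) f + l^2 * (\<Sum>b\<in>I. (c b)^2)/8)
     = exp (l * measure_pmf.expectation (Pi_pmf (insert a I) False P) f + l^2 * (\<Sum>b\<in>insert a I. (c b)^2)/8)"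
    using insert.hyps by (simp add: exp_add[symmetric] algebra_simps add_divide_distrib)
  finally show ?case .
qed

lemma tail:
  fixes P :: "'a \<Rightarrow> bool pmf" and c :: "'a \<Rightarrow> real" and S t :: real
  assumes fin: "finite I" and bd: "\<And>X a. a \<in> I \<Longrightarrow> \<bar>f (X(a:=True)) - f (X(a:=False))\<bar> \<le> c a"
    and S: "(\<Sum>a\<in>I. (c a)^2) \<le> S" "S > 0" and t: "t \<ge> 0"
  shows "measure_pmf.prob (Pi_pmf I False P) {X. t \<le> f X - measure_pmf.expectation (Pi_pmf I False P) f}
         \<le> exp (-2 * t^2 / S)"
proof -
  let ?p = "Pi_pmf I False P"
  let ?E = "measure_pmf.expectation ?p f"
  define l where "l = 4*t/S"
  have l: "l \<ge> 0" using S t by (simp add: l_def)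
  have finp: "finite (set_pmf ?p)" by (rule finite_set_Pi_bool[OF fin])
  have "measure_pmf.prob ?p {X. t \<le> f X - ?E} = measure_pmf.expectation ?p (indicator {X. t \<le> f X - ?E} :: _ \<Rightarrow> real)"
    by (simp add: measure_pmf.emeasure_eq_measure)
  also have "\<dots> \<le> measure_pmf.expectation ?p (\<lambda>X. exp (l * (f X - ?E - t)))"
  proof (rule integral_mono)
    fix X
    show "(indicator {X. t \<le> f X - ?E} X :: real) \<le> exp (l * (f X - ?E - t))"
    proof (cases "t \<le> f X - ?E")
      case True
      then have "0 \<le> l * (f X - ?E - t)" using l by simp
      then show ?thesis using True by simp
    qed simp
  qed (auto intro!: integrable_measure_pmf_finite finp)
  also have "\<dots> = exp (- l * (?E + t)) * measure_pmf.expectation ?p (\<lambda>X. exp (l * f X))"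
  proof -
    have "(\<lambda>X. exp (l * (f X - ?E - t))) = (\<lambda>X. exp (- l * (?E + t)) * exp (l * f X))"
      by (rule ext) (simp add: exp_add[symmetric] algebra_simps)
    then show ?thesis by simp
  qed
  also have "\<dots> \<le> exp (- l * (?E + t)) * exp (l * ?E + l^2 * (\<Sum>a\<in>I. (c a)^2)/8)"
    by (rule mult_left_mono[OF mcd[OF fin l]]) (use bd in auto)
  also have "\<dots> = exp (- l * t + l^2 * (\<Sum>a\<in>I. (c a)^2)/8)"
    by (simp add: exp_add[symmetric] algebra_simps)
  also have "\<dots> \<le> exp (- l * t + l^2 * S/8)"
    using S(1) by (simp add: divide_right_mono mult_left_mono)
  also have "- l * t + l^2 * S/8 = -2 * t^2 / S"
    using S(2) by (simp add: l_def field_simps power2_eq_square)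
  finally show ?thesis .
qed



definition Ew where
  "Ew n m \<theta> \<beta> l i j = measure_pmf.expectation (resp_dist n m \<theta> \<beta>) (\<lambda>X. bX X l i * (1 - bX X l j))"

definition offD where
  "offD n m p \<theta> \<beta> A X i j = 1 / dconst n m p *
     (\<Sum>l<n. bA A l i * bA A l j * (bX X l i * (1 - bX X l j) - Ew n m \<theta> \<beta> l i j))"

definition Gm where
  "Gm n m p A X i j = 1 / dconst n m p * (\<Sum>l<n. bA A l i * bA A l j * (bX X l i * (1 - bX X l j)))"

definition Fu where
  "Fu n m p \<beta> A u X = (\<Sum>i<m. \<Sum>j<m. pistar m \<beta> i * (u j - u i) * Gm n m p A X i j)"

definition ecol where
  "ecol n m p \<theta> \<beta> A X j = (\<Sum>i<m. pistar m \<beta> i * (Pmat n m p A X i j - Pstar n m p \<theta> \<beta> A i j))"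

lemma L1off:
  "offD n m p \<theta> \<beta> A X i j =
     1 / dconst n m p * (\<Sum>l<n. bA A l i * bA A l j * bX X l i * (1 - bX X l j)) -
     1 / dconst n m p * (\<Sum>l<n. bA A l i * bA A l j *
                 measure_pmf.expectation (resp_dist n m \<theta> \<beta>) (\<lambda>X. bX X l i * (1 - bX X l j)))"
proof -
  have "offD n m p \<theta> \<beta> A X i j = 1 / dconst n m p * (\<Sum>l<n. bA A l i * bA A l j * bX X l i * (1 - bX X l j) -
     bA A l i * bA A l j * measure_pmf.expectation (resp_dist n m \<theta> \<beta>) (\<lambda>X. bX X l i * (1 - bX X l j)))"
    unfolding offD_def Ew_def by (intro arg_cong[where f="\<lambda>x. _ * x"] sum.cong refl) (simp add: algebra_simps)
  also have "\<dots> = 1 / dconst n m p * (\<Sum>l<n. bA A l i * bA A l j * bX X l i * (1 - bX X l j)) -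
     1 / dconst n m p * (\<Sum>l<n. bA A l i * bA A l j *
                 measure_pmf.expectation (resp_dist n m \<theta> \<beta>) (\<lambda>X. bX X l i * (1 - bX X l j)))"
    by (simp only: sum_subtractf right_diff_distrib)
  finally show ?thesis .
qed

lemma L1:
  "Pmat n m p A X i j - Pstar n m p \<theta> \<beta> A i j =
     (if i \<noteq> j then offD n m p \<theta> \<beta> A X i j else - (\<Sum>k\<in>{..<m} - {i}. offD n m p \<theta> \<beta> A X i k))"
proof (cases "i = j")
  case False
  then show ?thesis unfolding Pmat_def Pstar_def Let_def L1off by simp
next
  case True
  then show ?thesis unfolding Pmat_def Pstar_def Let_def L1off
    by (simp add: sum_subtractf)
qed

lemma L2:
  "(\<Sum>j<m. u j * ecol n m p \<theta> \<beta> A X j) =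
   (\<Sum>i<m. \<Sum>j<m. pistar m \<beta> i * (u j - u i) * offD n m p \<theta> \<beta> A X i j)"
proof -
  have "(\<Sum>j<m. u j * ecol n m p \<theta> \<beta> A X j) =
    (\<Sum>j<m. \<Sum>i<m. u j * pistar m \<beta> i * (Pmat n m p A X i j - Pstar n m p \<theta> \<beta> A i j))"
    unfolding ecol_def by (simp add: sum_distrib_left mult.assoc)
  also have "\<dots> = (\<Sum>i<m. \<Sum>j<m. u j * pistar m \<beta> i * (Pmat n m p A X i j - Pstar n m p \<theta> \<beta> A i j))"
    by (rule sum.swap)
  also have "\<dots> = (\<Sum>i<m. \<Sum>j<m. pistar m \<beta> i * (u j - u i) * offD n m p \<theta> \<beta> A X i j)"
  proof (rule sum.cong[OF refl])
    fix i assume i: "i \<in> {..<m}"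
    let ?D = "offD n m p \<theta> \<beta> A X i"
    have "(\<Sum>j<m. u j * pistar m \<beta> i * (Pmat n m p A X i j - Pstar n m p \<theta> \<beta> A i j))
      = u i * pistar m \<beta> i * (- (\<Sum>k\<in>{..<m} - {i}. ?D k)) + (\<Sum>j\<in>{..<m}-{i}. u j * pistar m \<beta> i * ?D j)"
      using i by (simp add: sum.remove[of "{..<m}" i] L1)
    also have "\<dots> = (\<Sum>j\<in>{..<m}-{i}. pistar m \<beta> i * (u j - u i) * ?D j)"
      by (simp add: sum_distrib_left sum_subtractf algebra_simps sum_negf)
    also have "\<dots> = (\<Sum>j<m. pistar m \<beta> i * (u j - u i) * ?D j)"
      using i by (simp add: sum.remove[of "{..<m}" i])
    finally show "(\<Sum>j<m. u j * pistar m \<beta> i * (Pmat n m p A X i j - Pstar n m p \<theta> \<beta> A i j))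
      = (\<Sum>j<m. pistar m \<beta> i * (u j - u i) * ?D j)" .
  qed
  finally show ?thesis .
qed

lemma finite_resp: "finite (set_pmf (resp_dist n m \<theta> \<beta>))"
  unfolding resp_dist_def by (rule finite_set_Pi_bool) simp

lemma L3:
  "(\<Sum>i<m. \<Sum>j<m. pistar m \<beta> i * (u j - u i) * offD n m p \<theta> \<beta> A X i j) =
   Fu n m p \<beta> A u X - measure_pmf.expectation (resp_dist n m \<theta> \<beta>) (Fu n m p \<beta> A u)"
proof -
  have int: "integrable (measure_pmf (resp_dist n m \<theta> \<beta>)) f" for f :: "_ \<Rightarrow> real"
    by (rule integrable_measure_pmf_finite[OF finite_resp])
  have E: "measure_pmf.expectation (resp_dist n m \<theta> \<beta>) (Fu n m p \<beta> A u) =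
     (\<Sum>i<m. \<Sum>j<m. pistar m \<beta> i * (u j - u i) * (1 / dconst n m p *
        (\<Sum>l<n. bA A l i * bA A l j * Ew n m \<theta> \<beta> l i j)))"
    unfolding Fu_def Gm_def Ew_def
    by (simp add: Bochner_Integration.integral_sum[OF int] int)
  have O: "offD n m p \<theta> \<beta> A X i j = Gm n m p A X i j -
      1 / dconst n m p * (\<Sum>l<n. bA A l i * bA A l j * Ew n m \<theta> \<beta> l i j)" for i j
    unfolding offD_def Gm_def
    by (simp only: sum_subtractf[symmetric] right_diff_distrib[symmetric])
  show ?thesis
    unfolding E unfolding Fu_def O
    by (simp only: right_diff_distrib sum_subtractf)
qed

lemma bX_upd: "bX (X(q:=v)) l k = (if (l,k) = q then of_bool v else bX X l k)"
  by (simp add: bX_def)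

lemma Gm_diff:
  assumes "l < n"
  shows "Gm n m p A (X((l,a):=True)) i j - Gm n m p A (X((l,a):=False)) i j =
    1 / dconst n m p * (bA A l i * bA A l j *
       (bX (X((l,a):=True)) l i * (1 - bX (X((l,a):=True)) l j) -
        bX (X((l,a):=False)) l i * (1 - bX (X((l,a):=False)) l j)))"
proof -
  let ?F = "\<lambda>Y l'. bA A l' i * bA A l' j * (bX Y l' i * (1 - bX Y l' j))"
  have "Gm n m p A (X((l,a):=True)) i j - Gm n m p A (X((l,a):=False)) i j =
     1 / dconst n m p * (\<Sum>l'<n. ?F (X((l,a):=True)) l' - ?F (X((l,a):=False)) l')"
    unfolding Gm_def by (simp only: sum_subtractf right_diff_distrib)
  also have "(\<Sum>l'<n. ?F (X((l,a):=True)) l' - ?F (X((l,a):=False)) l') =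
      ?F (X((l,a):=True)) l - ?F (X((l,a):=False)) l"
  proof -
    have "(\<Sum>l'<n. ?F (X((l,a):=True)) l' - ?F (X((l,a):=False)) l') =
      (?F (X((l,a):=True)) l - ?F (X((l,a):=False)) l) +
      (\<Sum>l'\<in>{..<n}-{l}. ?F (X((l,a):=True)) l' - ?F (X((l,a):=False)) l')"
      using assms by (simp add: sum.remove[of "{..<n}" l])
    also have "(\<Sum>l'\<in>{..<n}-{l}. ?F (X((l,a):=True)) l' - ?F (X((l,a):=False)) l') = 0"
      by (rule sum.neutral) (auto simp: bX_upd)
    finally show ?thesis by (simp only: add_0_right)
  qed
  finally show ?thesis by (simp only: right_diff_distrib)
qed

lemma L4:
  assumes l: "l < n" and a: "a < m" and d: "0 < dconst n m p"
    and pi: "\<And>i. i < m \<Longrightarrow> 0 \<le> pistar m \<beta> i \<and> pistar m \<beta> i \<le> pm"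
  shows "\<bar>Fu n m p \<beta> A u (X((l,a):=True)) - Fu n m p \<beta> A u (X((l,a):=False))\<bar>
     \<le> 1 / dconst n m p * pm * (\<Sum>j<m. bA A l a * bA A l j * \<bar>u j - u a\<bar>)"
proof -
  let ?c = "1 / dconst n m p"
  let ?w = "\<lambda>i j. pistar m \<beta> i * (u j - u i)"
  let ?x = "\<lambda>k. bX X l k"
  have x01: "?x k = 0 \<or> ?x k = 1" for k by (simp add: bX_def)
  have A01: "bA A l k = 0 \<or> bA A l k = 1" for k by (simp add: bA_def)
  have inner: "bX (X((l,a):=True)) l i * (1 - bX (X((l,a):=True)) l j) -
        bX (X((l,a):=False)) l i * (1 - bX (X((l,a):=False)) l j) =
        (if i = a then (if j \<noteq> a then 1 - ?x j else 0) else 0) -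
        (if j = a then (if i \<noteq> a then ?x i else 0) else 0)" for i j
    by (simp add: bX_upd)
  have "Fu n m p \<beta> A u (X((l,a):=True)) - Fu n m p \<beta> A u (X((l,a):=False)) =
     (\<Sum>i<m. \<Sum>j<m. ?w i j * (Gm n m p A (X((l,a):=True)) i j - Gm n m p A (X((l,a):=False)) i j))"
    unfolding Fu_def by (simp only: sum_subtractf right_diff_distrib)
  also have "\<dots> = (\<Sum>i<m. \<Sum>j<m.
      (if i = a then (if j \<noteq> a then ?w i j * ?c * bA A l i * bA A l j * (1 - ?x j) else 0) else 0) -
      (if j = a then (if i \<noteq> a then ?w i j * ?c * bA A l i * bA A l j * ?x i else 0) else 0))"
    by (intro sum.cong refl) (simp add: Gm_diff[OF l] inner)
  also have "\<dots> = (\<Sum>j<m. (if j \<noteq> a then ?w a j * ?c * bA A l a * bA A l j * (1 - ?x j) else 0)) -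
       (\<Sum>i<m. (if i \<noteq> a then ?w i a * ?c * bA A l i * bA A l a * ?x i else 0))"
    using a by (simp add: sum_subtractf sum.delta sum.swap[of _ "{..<m}" "{..<m}"])
  also have "\<dots> = (\<Sum>j<m. (if j \<noteq> a then ?c * bA A l a * bA A l j * (?w a j * (1 - ?x j) - ?w j a * ?x j) else 0))"
    apply (simp only: sum_subtractf[symmetric])
    apply (rule sum.cong[OF refl])
    subgoal for j
    proof (cases "j = a")
      case False
      have nf: "j \<noteq> a" using False .
      show ?thesis unfolding if_P[OF nf] by algebra
    qed simp
    done
  finally have eq: "Fu n m p \<beta> A u (X((l,a):=True)) - Fu n m p \<beta> A u (X((l,a):=False)) = \<dots>" .
  have "\<bar>\<dots>\<bar> \<le> (\<Sum>j<m. \<bar>(if j \<noteq> a then ?c * bA A l a * bA A l j * (?w a j * (1 - ?x j) - ?w j a * ?x j) else 0)\<bar>)"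
    by (rule sum_abs)
  also have "\<dots> \<le> (\<Sum>j<m. ?c * pm * (bA A l a * bA A l j * \<bar>u j - u a\<bar>))"
  proof (rule sum_mono)
    fix j assume j: "j \<in> {..<m}"
    have c0: "?c \<ge> 0" using d by simp
    have "\<bar>?w a j * (1 - ?x j) - ?w j a * ?x j\<bar> \<le> pm * \<bar>u j - u a\<bar>"
    proof -
      have pa: "0 \<le> pistar m \<beta> a" "pistar m \<beta> a \<le> pm" using pi a by auto
      have pj: "0 \<le> pistar m \<beta> j" "pistar m \<beta> j \<le> pm" using pi j by auto
      show ?thesis
      proof (cases "?x j = 0")
        case True
        then show ?thesis using pa by (simp add: abs_mult mult_right_mono)
      next
        case False
        then have "?x j = 1" using x01[of j] by auto
        then show ?thesis using pj by (simp add: abs_mult mult_right_mono abs_minus_commute)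
      qed
    qed
    moreover have "bA A l a * bA A l j \<ge> 0" by (simp add: bA_def)
    ultimately have "\<bar>bA A l a * bA A l j * (?w a j * (1 - ?x j) - ?w j a * ?x j)\<bar> \<le> bA A l a * bA A l j * (pm * \<bar>u j - u a\<bar>)"
      by (simp add: abs_mult mult_left_mono bA_def)
    then have "\<bar>?c * bA A l a * bA A l j * (?w a j * (1 - ?x j) - ?w j a * ?x j)\<bar> \<le> ?c * (bA A l a * bA A l j * (pm * \<bar>u j - u a\<bar>))"
    proof -
      have "\<bar>?c * bA A l a * bA A l j * (?w a j * (1 - ?x j) - ?w j a * ?x j)\<bar> =
          ?c * \<bar>bA A l a * bA A l j * (?w a j * (1 - ?x j) - ?w j a * ?x j)\<bar>"
        using c0 by (simp only: abs_mult mult.assoc abs_of_nonneg)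
      with \<open>\<bar>bA A l a * bA A l j * _\<bar> \<le> _\<close> c0 show ?thesis by (metis mult_left_mono)
    qed
    then show "\<bar>(if j \<noteq> a then ?c * bA A l a * bA A l j * (?w a j * (1 - ?x j) - ?w j a * ?x j) else 0)\<bar>
        \<le> ?c * pm * (bA A l a * bA A l j * \<bar>u j - u a\<bar>)"
      using c0 pi[OF a] by (auto simp: algebra_simps)
  qed
  also have "\<dots> = ?c * pm * (\<Sum>j<m. bA A l a * bA A l j * \<bar>u j - u a\<bar>)"
    by (simp add: sum_distrib_left)
  finally show ?thesis using eq by simp
qed

lemma sum_pair: "(\<Sum>la\<in>A\<times>B. g (fst la) (snd la)) = (\<Sum>x\<in>A. \<Sum>y\<in>B. g x y)"
  unfolding sum.cartesian_product by (simp add: case_prod_beta)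

lemma sq_diff_sum: "(\<Sum>a<m. \<Sum>j<m. (u j - u a)^2) \<le> 2 * real m * (\<Sum>j<m. (u j)^2)"
proof -
  have "(\<Sum>a<m. \<Sum>j<m. (u j - u a)^2) = (\<Sum>a<m. \<Sum>j<m. (u j)^2 + (u a)^2 - 2 * (u j * u a))"
    by (intro sum.cong refl) (simp add: power2_eq_square algebra_simps)
  also have "\<dots> = 2 * real m * (\<Sum>j<m. (u j)^2) - 2 * (\<Sum>j<m. u j)^2"
    by (simp add: sum.distrib sum_subtractf sum_distrib_left[symmetric] sum_distrib_right[symmetric]
        power2_eq_square algebra_simps)
  also have "\<dots> \<le> 2 * real m * (\<Sum>j<m. (u j)^2)" by simp
  finally show ?thesis .
qed

lemma L5:
  assumes EA: "event_A n m p A" and d: "0 < dconst n m p"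
  shows "(\<Sum>la\<in>{..<n} \<times> {..<m}. (1 / dconst n m p * pm * (\<Sum>j<m. bA A (fst la) (snd la) * bA A (fst la) j * \<bar>u j - u (snd la)\<bar>))^2)
     \<le> (pm / dconst n m p)^2 * real m * (3/2 * real n * p^2) * (2 * real m * (\<Sum>j<m. (u j)^2))"
proof -
  let ?c = "pm / dconst n m p"
  have A01: "bA A l k = 0 \<or> bA A l k = 1" for l k by (simp add: bA_def)
  have step1: "(1 / dconst n m p * pm * (\<Sum>j<m. bA A l a * bA A l j * \<bar>u j - u a\<bar>))^2
      \<le> ?c^2 * (real m * (\<Sum>j<m. bA A l a * bA A l j * (u j - u a)^2))" for l a
  proof -
    have "(\<Sum>j<m. bA A l a * bA A l j * \<bar>u j - u a\<bar>)^2 \<le> (\<Sum>j<m. (bA A l a * bA A l j * \<bar>u j - u a\<bar>)^2) * card {..<m}"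
      by (rule sum_squared_le_sum_of_squares)
    also have "(\<Sum>j<m. (bA A l a * bA A l j * \<bar>u j - u a\<bar>)^2) = (\<Sum>j<m. bA A l a * bA A l j * (u j - u a)^2)"
      by (intro sum.cong refl) (auto simp: bA_def power2_eq_square)
    finally have "(\<Sum>j<m. bA A l a * bA A l j * \<bar>u j - u a\<bar>)^2 \<le> real m * (\<Sum>j<m. bA A l a * bA A l j * (u j - u a)^2)"
      by (simp add: mult.commute)
    then have "?c^2 * (\<Sum>j<m. bA A l a * bA A l j * \<bar>u j - u a\<bar>)^2 \<le> ?c^2 * (real m * (\<Sum>j<m. bA A l a * bA A l j * (u j - u a)^2))"
      by (rule mult_left_mono) simp
    moreover have "(1 / dconst n m p * pm * (\<Sum>j<m. bA A l a * bA A l j * \<bar>u j - u a\<bar>))^2 = ?c^2 * (\<Sum>j<m. bA A l a * bA A l j * \<bar>u j - u a\<bar>)^2"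
      by (simp add: power_mult_distrib power_divide)
    ultimately show ?thesis by simp
  qed
  have eqB: "(\<Sum>l<n. \<Sum>a<m. \<Sum>j<m. bA A l a * bA A l j * (u j - u a)^2) = (\<Sum>a<m. \<Sum>j<m. Bmat n A a j * (u j - u a)^2)"
  proof -
    have "(\<Sum>l<n. \<Sum>a<m. \<Sum>j<m. bA A l a * bA A l j * (u j - u a)^2) = (\<Sum>a<m. \<Sum>l<n. \<Sum>j<m. bA A l a * bA A l j * (u j - u a)^2)"
      by (rule sum.swap)
    also have "\<dots> = (\<Sum>a<m. \<Sum>j<m. \<Sum>l<n. bA A l a * bA A l j * (u j - u a)^2)"
      by (rule sum.cong[OF refl], rule sum.swap)
    also have "\<dots> = (\<Sum>a<m. \<Sum>j<m. Bmat n A a j * (u j - u a)^2)"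
      unfolding Bmat_def by (simp add: sum_distrib_right)
    finally show ?thesis .
  qed
  have leB: "(\<Sum>a<m. \<Sum>j<m. Bmat n A a j * (u j - u a)^2) \<le> (3/2 * real n * p^2) * (2 * real m * (\<Sum>j<m. (u j)^2))"
  proof -
    have "(\<Sum>a<m. \<Sum>j<m. Bmat n A a j * (u j - u a)^2) \<le> (\<Sum>a<m. \<Sum>j<m. (3/2 * real n * p^2) * (u j - u a)^2)"
    proof (intro sum_mono)
      fix a j assume a: "a \<in> {..<m}" and j: "j \<in> {..<m}"
      show "Bmat n A a j * (u j - u a)^2 \<le> (3/2 * real n * p^2) * (u j - u a)^2"
      proof (cases "a = j")
        case False
        then have "Bmat n A a j \<le> 3/2 * real n * p^2" using EA a j unfolding event_A_def by auto
        then show ?thesis by (rule mult_right_mono) simp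
      qed simp
    qed
    also have "\<dots> = (3/2 * real n * p^2) * (\<Sum>a<m. \<Sum>j<m. (u j - u a)^2)"
      by (simp add: sum_distrib_left)
    also have "\<dots> \<le> (3/2 * real n * p^2) * (2 * real m * (\<Sum>j<m. (u j)^2))"
      by (rule mult_left_mono[OF sq_diff_sum]) simp
    finally show ?thesis .
  qed
  have "(\<Sum>la\<in>{..<n} \<times> {..<m}. (1 / dconst n m p * pm * (\<Sum>j<m. bA A (fst la) (snd la) * bA A (fst la) j * \<bar>u j - u (snd la)\<bar>))^2)
      \<le> (\<Sum>la\<in>{..<n} \<times> {..<m}. ?c^2 * (real m * (\<Sum>j<m. bA A (fst la) (snd la) * bA A (fst la) j * (u j - u (snd la))^2)))"
    by (rule sum_mono) (rule step1)
  also have "\<dots> = ?c^2 * real m * (\<Sum>l<n. \<Sum>a<m. \<Sum>j<m. bA A l a * bA A l j * (u j - u a)^2)"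
    by (simp only: sum_pair[where g="\<lambda>l a. ?c^2 * (real m * (\<Sum>j<m. bA A l a * bA A l j * (u j - u a)^2))"])
       (simp add: sum_distrib_left mult.assoc)
  also have "?c^2 * real m * (\<Sum>l<n. \<Sum>a<m. \<Sum>j<m. bA A l a * bA A l j * (u j - u a)^2)
     \<le> ?c^2 * real m * ((3/2 * real n * p^2) * (2 * real m * (\<Sum>j<m. (u j)^2)))"
    unfolding eqB by (rule mult_left_mono[OF leB]) simp
  finally show ?thesis
    by (simp only: mult.assoc)
qed



definition Nset :: "nat \<Rightarrow> (nat \<Rightarrow> int) set" where
  "Nset m = {z \<in> PiE {..<m} (\<lambda>_. {-int(2*m)..int(2*m)}). (\<Sum>j<m. (z j)^2) \<le> 4 * int m}"

lemma geo3: "(\<Sum>k\<in>{-int K..int K}. (1/2::real)^nat \<bar>k\<bar>) = 3 - 2 * (1/2)^K"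
proof (induction K)
  case 0 then show ?case by simp
next
  case (Suc K)
  have set: "{-int (Suc K)..int (Suc K)} = insert (int (Suc K)) (insert (-int(Suc K)) {-int K..int K})"
    by auto
  have "(\<Sum>k\<in>{-int (Suc K)..int (Suc K)}. (1/2::real)^nat \<bar>k\<bar>) =
      (1/2)^(Suc K) + (1/2)^(Suc K) + (\<Sum>k\<in>{-int K..int K}. (1/2::real)^nat \<bar>k\<bar>)"
  proof -
    have e: "nat (1 + int K) = Suc K" "nat (int K + 1) = Suc K" by auto
    show ?thesis unfolding set by (simp add: e)
  qed
  also have "\<dots> = 3 - 2 * (1/2)^(Suc K)" using Suc by simp
  finally show ?case .
qed

lemma card_Nset: "real (card (Nset m)) \<le> 48 ^ m"
proof -
  let ?B = "PiE {..<m} (\<lambda>_. {-int(2*m)..int(2*m)})"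
  let ?w = "\<lambda>z. (2::real)^(4*m) * (\<Prod>j<m. (1/2::real)^nat \<bar>z j\<bar>)"
  have finB: "finite ?B" by (intro finite_PiE) auto
  have sub: "Nset m \<subseteq> ?B" by (auto simp: Nset_def)
  have w1: "1 \<le> ?w z" if "z \<in> Nset m" for z
  proof -
    have "(\<Sum>j<m. \<bar>z j\<bar>) \<le> (\<Sum>j<m. (z j)^2)"
    proof (rule sum_mono)
      fix j
      show "\<bar>z j\<bar> \<le> (z j)^2"
      proof (cases "z j = 0")
        case False
        then have "1 \<le> \<bar>z j\<bar>" by simp
        then have "\<bar>z j\<bar> * 1 \<le> \<bar>z j\<bar> * \<bar>z j\<bar>" by (intro mult_left_mono) auto
        then show ?thesis by (simp add: power2_eq_square abs_mult_self_eq)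
      qed simp
    qed
    also have "\<dots> \<le> 4 * int m" using that by (simp add: Nset_def)
    finally have S0: "(\<Sum>j<m. \<bar>z j\<bar>) \<le> 4 * int m" .
    have "int (\<Sum>j<m. nat \<bar>z j\<bar>) = (\<Sum>j<m. \<bar>z j\<bar>)" by (simp add: of_nat_sum)
    with S0 have S: "(\<Sum>j<m. nat \<bar>z j\<bar>) \<le> 4 * m" by linarith
    have "(\<Prod>j<m. (1/2::real)^nat \<bar>z j\<bar>) = (1/2)^(\<Sum>j<m. nat \<bar>z j\<bar>)"
      by (simp add: power_sum)
    also have "\<dots> \<ge> (1/2)^(4*m)" using S by (intro power_decreasing) auto
    finally have "(1/2::real)^(4*m) \<le> (\<Prod>j<m. (1/2::real)^nat \<bar>z j\<bar>)" .
    then have "(2::real)^(4*m) * (1/2)^(4*m) \<le> ?w z" by (intro mult_left_mono) auto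
    moreover have "(2::real)^(4*m) * (1/2)^(4*m) = 1" by (simp flip: power_mult_distrib)
    ultimately show ?thesis by simp
  qed
  have "real (card (Nset m)) = (\<Sum>z\<in>Nset m. 1)" by simp
  also have "\<dots> \<le> (\<Sum>z\<in>Nset m. ?w z)" by (rule sum_mono) (rule w1)
  also have "\<dots> \<le> (\<Sum>z\<in>?B. ?w z)"
    by (rule sum_mono2[OF finB sub]) (intro mult_nonneg_nonneg prod_nonneg; simp)
  also have "\<dots> = 2^(4*m) * (\<Prod>j<m. \<Sum>k\<in>{-int(2*m)..int(2*m)}. (1/2::real)^nat \<bar>k\<bar>)"
    by (subst prod_sum_PiE) (auto simp: sum_distrib_left)
  also have "\<dots> \<le> 2^(4*m) * (\<Prod>j<m. (3::real))"
  proof (intro mult_left_mono prod_mono conjI)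
    fix j
    show "0 \<le> (\<Sum>k\<in>{-int(2*m)..int(2*m)}. (1/2::real)^nat \<bar>k\<bar>)" by (intro sum_nonneg) auto
    show "(\<Sum>k\<in>{-int(2*m)..int(2*m)}. (1/2::real)^nat \<bar>k\<bar>) \<le> 3"
      using geo3[of "2*m"] by simp
  qed simp
  also have "\<dots> = 48^m"
  proof -
    have "(2::real)^(4*m) = 16^m" by (simp add: power_mult)
    moreover have "(16::real)^m * 3^m = 48^m" by (simp flip: power_mult_distrib)
    ultimately show ?thesis by simp
  qed
  finally show ?thesis .
qed

lemma trunc_props:
  fixes v :: real
  defines "z \<equiv> (if v \<ge> 0 then \<lfloor>v\<rfloor> else - \<lfloor>-v\<rfloor>)"
  shows "\<bar>real_of_int z\<bar> \<le> \<bar>v\<bar>" "real_of_int z * v \<ge> v^2 - \<bar>v\<bar>"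
proof -
  show "\<bar>real_of_int z\<bar> \<le> \<bar>v\<bar>"
    unfolding z_def by (cases "v \<ge> 0") auto
  show "real_of_int z * v \<ge> v^2 - \<bar>v\<bar>"
  proof (cases "v \<ge> 0")
    case True
    have "v - 1 \<le> real_of_int \<lfloor>v\<rfloor>" by linarith
    then have "(v - 1) * v \<le> real_of_int \<lfloor>v\<rfloor> * v" using True by (rule mult_right_mono)
    then show ?thesis using True by (simp add: z_def power2_eq_square algebra_simps)
  next
    case False
    have "-v - 1 \<le> real_of_int \<lfloor>-v\<rfloor>" by linarith
    then have "(-v - 1) * (-v) \<le> real_of_int \<lfloor>-v\<rfloor> * (-v)" using False by (intro mult_right_mono) auto
    then show ?thesis using False by (simp add: z_def power2_eq_square algebra_simps)
  qed
qed

lemma net: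
  fixes e :: "nat \<Rightarrow> real"
  assumes m: "m > 0"
  shows "\<exists>z\<in>Nset m. sqrt (\<Sum>j<m. (e j)^2) / 2 \<le> (\<Sum>j<m. real_of_int (z j) / (2 * sqrt m) * e j)"
proof (cases "(\<Sum>j<m. (e j)^2) = 0")
  case True
  have "restrict (\<lambda>_. 0::int) {..<m} \<in> Nset m" by (auto simp: Nset_def)
  then show ?thesis using True by (intro bexI[of _ "restrict (\<lambda>_. 0) {..<m}"]) auto
next
  case False
  define R where "R = sqrt (\<Sum>j<m. (e j)^2)"
  have R2: "R^2 = (\<Sum>j<m. (e j)^2)" unfolding R_def by (simp add: sum_nonneg)
  have "(\<Sum>j<m. (e j)^2) \<ge> 0" by (simp add: sum_nonneg)
  then have Rp: "R > 0" using False unfolding R_def by simp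
  define s where "s = 2 * sqrt m / R"
  define v where "v = (\<lambda>j. s * e j)"
  define zf where "zf = (\<lambda>j. if v j \<ge> 0 then \<lfloor>v j\<rfloor> else - \<lfloor>-v j\<rfloor>)"
  define z where "z = restrict zf {..<m}"
  have sm: "sqrt (real m) > 0" using m by simp
  have sumv: "(\<Sum>j<m. (v j)^2) = 4 * m"
  proof -
    have "(\<Sum>j<m. (v j)^2) = s^2 * R^2" unfolding v_def R2 by (simp add: power_mult_distrib sum_distrib_left)
    also have "\<dots> = 4 * m" using Rp by (simp add: s_def power_divide power_mult_distrib)
    finally show ?thesis .
  qed
  have zabs: "\<bar>real_of_int (zf j)\<bar> \<le> \<bar>v j\<bar>" for j using trunc_props(1)[of "v j"] by (simp add: zf_def)
  have zv: "real_of_int (zf j) * v j \<ge> (v j)^2 - \<bar>v j\<bar>" for j using trunc_props(2)[of "v j"] by (simp add: zf_def)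
  have vle: "\<bar>v j\<bar> \<le> 2 * real m" if "j < m" for j
  proof -
    have "(v j)^2 \<le> (\<Sum>j<m. (v j)^2)" using that by (intro member_le_sum) auto
    then have "(v j)^2 \<le> (2 * sqrt m)^2" using sumv by (simp add: power_mult_distrib)
    then have "\<bar>v j\<bar> \<le> 2 * sqrt m" using sm power2_le_imp_le[of "\<bar>v j\<bar>" "2 * sqrt m"] by (simp add: power2_abs)
    also have "sqrt (real m) \<le> real m"
    proof -
      have "real m \<le> real m * real m" using m by (simp add: Suc_leI)
      then have "sqrt (real m) \<le> sqrt (real m * real m)" by (rule real_sqrt_le_mono)
      then show ?thesis by simp
    qed
    finally show ?thesis by simp
  qed
  have zsq: "(\<Sum>j<m. real_of_int ((z j)^2)) \<le> 4 * m"
  proof -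
    have "(\<Sum>j<m. real_of_int ((z j)^2)) \<le> (\<Sum>j<m. (v j)^2)"
    proof (rule sum_mono)
      fix j assume "j \<in> {..<m}"
      then have "real_of_int ((z j)^2) = (real_of_int (zf j))^2" by (simp add: z_def)
      also have "\<dots> \<le> (v j)^2" using zabs[of j] by (metis abs_ge_zero power2_abs power_mono)
      finally show "real_of_int ((z j)^2) \<le> (v j)^2" .
    qed
    then show ?thesis using sumv by simp
  qed
  have zN: "z \<in> Nset m"
    unfolding Nset_def
  proof (intro CollectI conjI)
    show "z \<in> PiE {..<m} (\<lambda>_. {-int(2*m)..int(2*m)})"
    proof (rule PiE_I)
      fix j assume j: "j \<in> {..<m}"
      have "\<bar>real_of_int (zf j)\<bar> \<le> 2 * real m" using zabs[of j] vle[of j] j by auto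
      then have "\<bar>zf j\<bar> \<le> int (2*m)" by linarith
      then show "z j \<in> {-int(2*m)..int(2*m)}" using j by (auto simp: z_def)
    qed (simp add: z_def)
    show "(\<Sum>j<m. (z j)^2) \<le> 4 * int m"
    proof -
      have "real_of_int (\<Sum>j<m. (z j)^2) \<le> real_of_int (4 * int m)" using zsq by (simp add: of_int_sum)
      then show ?thesis by linarith
    qed
  qed
  have "(\<Sum>j<m. real_of_int (z j) * v j) \<ge> (\<Sum>j<m. (3/4) * (v j)^2 - 1)"
  proof (rule sum_mono)
    fix j assume "j \<in> {..<m}"
    then have "real_of_int (z j) * v j \<ge> (v j)^2 - \<bar>v j\<bar>" using zv[of j] by (simp add: z_def)
    moreover have "\<bar>v j\<bar> \<le> (v j)^2/4 + 1"
    proof -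
      have "0 \<le> (\<bar>v j\<bar> - 2)^2" by simp
      then have "4 * \<bar>v j\<bar> \<le> \<bar>v j\<bar>^2 + 4" by (simp add: power2_eq_square algebra_simps)
      then show ?thesis by (simp add: power2_abs)
    qed
    ultimately show "(3/4) * (v j)^2 - 1 \<le> real_of_int (z j) * v j" by linarith
  qed
  also have "(\<Sum>j<m. (3/4) * (v j)^2 - 1) = 2 * real m"
  proof -
    have "(\<Sum>j<m. (3/4) * (v j)^2) = (3/4) * (\<Sum>j<m. (v j)^2)" by (simp add: sum_distrib_left)
    then show ?thesis by (simp add: sum_subtractf sumv)
  qed
  finally have zvs: "2 * real m \<le> (\<Sum>j<m. real_of_int (z j) * v j)" .
  have "(\<Sum>j<m. real_of_int (z j) / (2 * sqrt m) * e j) = (\<Sum>j<m. real_of_int (z j) * v j) * (R / (4*m))"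
  proof -
    have "(\<Sum>j<m. real_of_int (z j) * v j) * (R / (4*m)) = (\<Sum>j<m. real_of_int (z j) * e j * (s * R / (4*m)))"
      by (simp add: v_def sum_distrib_right mult.assoc mult.left_commute sum_divide_distrib)
    also have "s * R / (4*m) = 1 / (2 * sqrt m)"
      using Rp sm by (simp add: s_def field_simps)
    finally show ?thesis by (simp add: mult.commute mult.left_commute)
  qed
  also have "\<dots> \<ge> 2 * real m * (R / (4*m))" using zvs Rp by (intro mult_right_mono) auto
  also have "2 * real m * (R / (4*m)) = R / 2" using m by simp
  finally show ?thesis using zN unfolding R_def by blast
qed



lemma pistar_bound:
  assumes i: "i < m"
  shows "0 \<le> pistar m \<beta> i \<and> pistar m \<beta> i \<le> exp (kappa m \<beta>) / real m"
proof -
  let ?S = "\<beta> ` {..<m}"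
  have fin: "finite ?S" "?S \<noteq> {}" using i by auto
  have mx: "\<beta> i \<le> Max ?S" using fin i by (intro Max_ge) auto
  have mn: "Min ?S \<le> \<beta> k" if "k < m" for k using fin that by (intro Min_le) auto
  have sum_ge: "real m * exp (Min ?S) \<le> (\<Sum>k<m. exp (\<beta> k))"
  proof -
    have "(\<Sum>k<m. exp (Min ?S)) \<le> (\<Sum>k<m. exp (\<beta> k))" using mn by (intro sum_mono) auto
    then show ?thesis by simp
  qed
  have pos: "0 < real m * exp (Min ?S)" using i by simp
  have "pistar m \<beta> i = exp (\<beta> i) / (\<Sum>k<m. exp (\<beta> k))" by (simp add: pistar_def)
  also have "\<dots> \<le> exp (Max ?S) / (real m * exp (Min ?S))"
    using sum_ge pos mx by (intro frac_le) auto
  also have "\<dots> = exp (kappa m \<beta>) / real m"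
    by (simp add: kappa_def exp_diff)
  finally show ?thesis using pos sum_ge by (simp add: pistar_def)
qed

lemma tail_u:
  assumes EA: "event_A n m p A" and d: "0 < dconst n m p"
    and pi: "\<And>i. i < m \<Longrightarrow> 0 \<le> pistar m \<beta> i \<and> pistar m \<beta> i \<le> pm"
    and u: "(\<Sum>j<m. (u j)^2) \<le> 1" and t: "t \<ge> 0"
    and S: "S = (pm / dconst n m p)^2 * real m * (3/2 * real n * p^2) * (2 * real m)" and Sp: "S > 0"
  shows "measure_pmf.prob (resp_dist n m \<theta> \<beta>) {X. t \<le> Fu n m p \<beta> A u X - measure_pmf.expectation (resp_dist n m \<theta> \<beta>) (Fu n m p \<beta> A u)}
     \<le> exp (-2 * t^2 / S)"
  unfolding resp_dist_def
proof (rule tail[where c = "\<lambda>la. 1 / dconst n m p * pm * (\<Sum>j<m. bA A (fst la) (snd la) * bA A (fst la) j * \<bar>u j - u (snd la)\<bar>)"])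
  show "finite ({..<n} \<times> {..<m})" by simp
  show "\<bar>Fu n m p \<beta> A u (X(a := True)) - Fu n m p \<beta> A u (X(a := False))\<bar>
     \<le> 1 / dconst n m p * pm * (\<Sum>j<m. bA A (fst a) (snd a) * bA A (fst a) j * \<bar>u j - u (snd a)\<bar>)"
    if "a \<in> {..<n} \<times> {..<m}" for X a
  proof -
    obtain l k where a: "a = (l, k)" by (cases a)
    show ?thesis using that L4[OF _ _ d pi, where l=l and a=k and u=u and X=X] a by auto
  qed
  have "(\<Sum>la\<in>{..<n} \<times> {..<m}. (1 / dconst n m p * pm * (\<Sum>j<m. bA A (fst la) (snd la) * bA A (fst la) j * \<bar>u j - u (snd la)\<bar>))^2)
     \<le> (pm / dconst n m p)^2 * real m * (3/2 * real n * p^2) * (2 * real m * (\<Sum>j<m. (u j)^2))"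
    by (rule L5[OF EA d])
  also have "\<dots> \<le> (pm / dconst n m p)^2 * real m * (3/2 * real n * p^2) * (2 * real m * 1)"
    using u by (intro mult_left_mono) auto
  finally show "(\<Sum>la\<in>{..<n} \<times> {..<m}. (1 / dconst n m p * pm * (\<Sum>j<m. bA A (fst la) (snd la) * bA A (fst la) j * \<bar>u j - u (snd la)\<bar>))^2) \<le> S"
    using S by simp
qed (use Sp t in auto)

theorem mainTheorem12:
  fixes n m :: nat and p :: real and \<theta> \<beta> :: "nat \<Rightarrow> real"
    and A :: "nat \<Rightarrow> nat \<Rightarrow> bool"
  assumes "n \<ge> 1" and "m \<ge> 2" and "0 < p" and "p \<le> 1"
    and "event_A n m p A"
  shows "measure_pmf.prob (resp_dist n m \<theta> \<beta>)
           {X. err_norm n m p \<theta> \<beta> A X \<le>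
               2 * exp (kappa m \<beta>) * sqrt (16 * max (real m) (ln (real n * p^2)))
                 / (real m * sqrt (real n * p^2))}
         \<ge> 1 - min (exp (- 12 * real m)) ((real n * p^2) powr (-12))"
proof -
  note n1 = assms(1) and m2 = assms(2) and p0 = assms(3) and EA = assms(5)
  let ?P = "resp_dist n m \<theta> \<beta>"
  define x where "x = real n * p^2"
  define M where "M = max (real m) (ln x)"
  define K where "K = exp (kappa m \<beta>)"
  define Bnd where "Bnd = 2 * K * sqrt (16 * M) / (real m * sqrt x)"
  define pm where "pm = K / real m"
  define S where "S = (pm / dconst n m p)^2 * real m * (3/2 * real n * p^2) * (2 * real m)"
  define t where "t = Bnd / 2"
  define uz where "uz = (\<lambda>(z::nat\<Rightarrow>int) j. real_of_int (z j) / (2 * sqrt (real m)))"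
  define Ev where "Ev = (\<lambda>z. {X. t \<le> Fu n m p \<beta> A (uz z) X - measure_pmf.expectation ?P (Fu n m p \<beta> A (uz z))})"
  have mpos: "real m > 0" using m2 by simp
  have xpos: "x > 0" using n1 p0 by (simp add: x_def)
  have Kpos: "K > 0" by (simp add: K_def)
  have Mm: "real m \<le> M" and Ml: "ln x \<le> M" by (auto simp: M_def)
  have Mpos: "M > 0" using Mm mpos by linarith
  have dval: "dconst n m p = 3/2 * real m * x" by (simp add: dconst_def x_def)
  have dpos: "0 < dconst n m p" unfolding dval using mpos xpos by (intro mult_pos_pos) auto
  have Sval: "S = 3 * K^2 * x / (dconst n m p)^2"
    using mpos by (simp add: S_def pm_def x_def power_divide field_simps power2_eq_square)
  have Spos: "S > 0" using Sval Kpos xpos dpos by simp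
  have Bpos: "Bnd > 0" using Kpos Mpos mpos xpos by (simp add: Bnd_def)
  have tpos: "t \<ge> 0" using Bpos by (simp add: t_def)
  have pi: "\<And>i. i < m \<Longrightarrow> 0 \<le> pistar m \<beta> i \<and> pistar m \<beta> i \<le> pm"
    using pistar_bound by (simp add: pm_def K_def)
  have expo: "2 * t^2 / S = 24 * M"
  proof -
    have B2: "Bnd^2 = 64 * K^2 * M / (real m ^2 * x)"
      using Mpos xpos by (simp add: Bnd_def power_divide power_mult_distrib real_sqrt_mult)
    show ?thesis
      unfolding t_def Sval dval using B2 mpos xpos Kpos
      by (simp add: power_divide field_simps power2_eq_square)
  qed
  have tail_z: "measure_pmf.prob ?P (Ev z) \<le> exp (- (24 * M))" if z: "z \<in> Nset m" for z
  proof -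
    have "(\<Sum>j<m. (uz z j)^2) = (\<Sum>j<m. real_of_int ((z j)^2)) / (4 * real m)"
      using mpos by (simp add: uz_def power_divide power_mult_distrib sum_divide_distrib)
    also have "(\<Sum>j<m. real_of_int ((z j)^2)) \<le> 4 * real m"
    proof -
      have "(\<Sum>j<m. (z j)^2) \<le> 4 * int m" using z by (simp add: Nset_def)
      then have "real_of_int (\<Sum>j<m. (z j)^2) \<le> real_of_int (4 * int m)" by linarith
      then show ?thesis by (simp add: of_int_sum)
    qed
    then have "(\<Sum>j<m. real_of_int ((z j)^2)) / (4 * real m) \<le> 1" using mpos by simp
    finally have u1: "(\<Sum>j<m. (uz z j)^2) \<le> 1" by simp
    have "measure_pmf.prob ?P (Ev z) \<le> exp (-2 * t^2 / S)"
      unfolding Ev_def by (rule tail_u[OF EA dpos pi u1 tpos S_def Spos])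
    also have "-2 * t^2 / S = - (24 * M)" using expo by simp
    finally show ?thesis .
  qed
  have finN: "finite (Nset m)"
    by (rule finite_subset[of _ "PiE {..<m} (\<lambda>_. {-int(2*m)..int(2*m)})"]) (auto simp: Nset_def intro!: finite_PiE)
  have bad_sub: "{X. \<not> err_norm n m p \<theta> \<beta> A X \<le> Bnd} \<subseteq> (\<Union>z\<in>Nset m. Ev z)"
  proof
    fix X assume "X \<in> {X. \<not> err_norm n m p \<theta> \<beta> A X \<le> Bnd}"
    then have big: "Bnd < err_norm n m p \<theta> \<beta> A X" by simp
    have en: "err_norm n m p \<theta> \<beta> A X = sqrt (\<Sum>j<m. (ecol n m p \<theta> \<beta> A X j)^2)"
      by (simp add: err_norm_def ecol_def)
    obtain z where z: "z \<in> Nset m"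
      and zz: "sqrt (\<Sum>j<m. (ecol n m p \<theta> \<beta> A X j)^2) / 2 \<le> (\<Sum>j<m. real_of_int (z j) / (2 * sqrt m) * ecol n m p \<theta> \<beta> A X j)"
      using net[OF mpos[simplified]] by blast
    have "(\<Sum>j<m. real_of_int (z j) / (2 * sqrt m) * ecol n m p \<theta> \<beta> A X j) = (\<Sum>j<m. uz z j * ecol n m p \<theta> \<beta> A X j)"
      by (simp add: uz_def)
    also have "\<dots> = Fu n m p \<beta> A (uz z) X - measure_pmf.expectation ?P (Fu n m p \<beta> A (uz z))"
      by (simp only: L2 L3)
    finally have "t \<le> Fu n m p \<beta> A (uz z) X - measure_pmf.expectation ?P (Fu n m p \<beta> A (uz z))"
      using zz big en by (simp add: t_def)
    then show "X \<in> (\<Union>z\<in>Nset m. Ev z)" using z by (auto simp: Ev_def)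
  qed
  have "measure_pmf.prob ?P {X. \<not> err_norm n m p \<theta> \<beta> A X \<le> Bnd} \<le> measure_pmf.prob ?P (\<Union>z\<in>Nset m. Ev z)"
    by (rule measure_pmf.finite_measure_mono[OF bad_sub]) simp
  also have "\<dots> \<le> (\<Sum>z\<in>Nset m. measure_pmf.prob ?P (Ev z))"
    by (rule measure_pmf.finite_measure_subadditive_finite[OF finN]) simp
  also have "\<dots> \<le> (\<Sum>z\<in>Nset m. exp (- (24 * M)))"
    by (rule sum_mono) (rule tail_z)
  also have "\<dots> = real (card (Nset m)) * exp (- (24 * M))" by simp
  also have "\<dots> \<le> 48 ^ m * exp (- (24 * M))"
    by (rule mult_right_mono[OF card_Nset]) simp
  also have "\<dots> \<le> exp (12 * M) * exp (- (24 * M))"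
  proof (rule mult_right_mono)
    have "(48::real) \<le> exp 12"
    proof -
      have "(7::real) \<le> exp 6" using exp_ge_add_one_self[of 6] by simp
      then have "(7::real) * 7 \<le> exp 6 * exp 6" by (intro mult_mono) auto
      then show ?thesis by (simp flip: exp_add)
    qed
    then have "(48::real)^m \<le> (exp 12)^m" by (intro power_mono) auto
    also have "\<dots> = exp (real m * 12)" by (simp add: exp_of_nat_mult)
    also have "\<dots> \<le> exp (12 * M)" using Mm by simp
    finally show "(48::real)^m \<le> exp (12 * M)" .
  qed simp
  also have "\<dots> = exp (- (12 * M))" by (simp flip: exp_add)
  also have "\<dots> \<le> min (exp (- 12 * real m)) (x powr (-12))"
  proof -
    have "exp (- (12 * M)) \<le> exp (- 12 * real m)" using Mm by simp
    moreover have "exp (- (12 * M)) \<le> exp (-12 * ln x)" using Ml by simp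
    moreover have "x powr (-12) = exp (-12 * ln x)" using xpos by (simp add: powr_def)
    ultimately show ?thesis by simp
  qed
  finally have bad: "measure_pmf.prob ?P {X. \<not> err_norm n m p \<theta> \<beta> A X \<le> Bnd}
     \<le> min (exp (- 12 * real m)) (x powr (-12))" .
  have "measure_pmf.prob ?P {X. err_norm n m p \<theta> \<beta> A X \<le> Bnd} =
      1 - measure_pmf.prob ?P {X. \<not> err_norm n m p \<theta> \<beta> A X \<le> Bnd}"
  proof -
    have "{X. err_norm n m p \<theta> \<beta> A X \<le> Bnd} = UNIV - {X. \<not> err_norm n m p \<theta> \<beta> A X \<le> Bnd}" by auto
    then show ?thesis using measure_pmf.prob_compl[of "{X. \<not> err_norm n m p \<theta> \<beta> A X \<le> Bnd}" ?P] by simp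
  qed
  with bad have "measure_pmf.prob ?P {X. err_norm n m p \<theta> \<beta> A X \<le> Bnd} \<ge> 1 - min (exp (- 12 * real m)) (x powr (-12))"
    by linarith
  then show ?thesis by (simp add: Bnd_def K_def M_def x_def)
qed


end
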